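(* (Quantalic McShane–Whitney Extension Theorem.) Let $\mathcal{V}$ be a quantale and let $(X,d)$ be a $\mathcal{V}$-category. For every subset $Y\subseteq X$ and every map $f\colon Y\to\mathcal{V}$ that is non-expansive from $(Y,d|_{Y\times Y})$ to $(\mathcal{V},d_{\mathcal{V}})$, there exists a map $\bar f\colon X\to\mathcal{V}$ that is non-expansive from $(X,d)$ to $(\mathcal{V},d_{\mathcal{V}})$ and satisfies $\bar f(y)=f(y)$ for all $y\in Y$.
   Context: A quantale is a complete lattice $(\mathcal{V},\sqsubseteq)$ equipped with a commutative monoid structure $(\mathcal{V},\otimes,k)$ such that $a\otimes\bigsqcup_i b_i=\bigsqcup_i (a\otimes b_i)$ for all $a$ and all families $(b_i)$. Its residuation $d_{\mathcal{V}}\colon\mathcal{V}\times\mathcal{V}\to\mathcal{V}$ is the map determined by $a\otimes b\sqsubseteq c \iff b\sqsubseteq d_{\mathcal{V}}(a,c)$ for all $a,b,c\in\mathcal{V}$. A $\mathcal{V}$-graph on a set $X$ is a map $d\colon X\times X\to\mathcal{V}$; it is a $\mathcal{V}$-category if $k\sqsubseteq d(x,x)$ and $d(x,y)\otimes d(y,z)\sqsubseteq d(x,z)$ for all $x,y,z\in X$. A map $f\colon X\to Z$ is non-expansive from $(X,d_X)$ to $(Z,d_Z)$ if $d_X(x,x')\sqsubseteq d_Z(f(x),f(x'))$ for all $x,x'\in X$. *)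

theory Defs
  imports Main
begin

definition quantale :: "('v::complete_lattice \<Rightarrow> 'v \<Rightarrow> 'v) \<Rightarrow> 'v \<Rightarrow> bool" where
  "quantale tensor k \<longleftrightarrow>
     (\<forall>a b c. tensor (tensor a b) c = tensor a (tensor b c)) \<and>
     (\<forall>a b. tensor a b = tensor b a) \<and>
     (\<forall>a. tensor k a = a) \<and>
     (\<forall>a B. tensor a (Sup B) = Sup ((\<lambda>b. tensor a b) ` B))"

text \<open>Residuation: the map with a tensor b <= c iff b <= residuum a c
(in a quantale this is exactly the join of all such b).\<close>
definition residuum :: "('v::complete_lattice \<Rightarrow> 'v \<Rightarrow> 'v) \<Rightarrow> 'v \<Rightarrow> 'v \<Rightarrow> 'v" where
  "residuum tensor a c = Sup {b. tensor a b \<le> c}"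

definition V_category :: "('v::complete_lattice \<Rightarrow> 'v \<Rightarrow> 'v) \<Rightarrow> 'v \<Rightarrow> 'x set \<Rightarrow> ('x \<Rightarrow> 'x \<Rightarrow> 'v) \<Rightarrow> bool" where
  "V_category tensor k X d \<longleftrightarrow>
     (\<forall>x\<in>X. k \<le> d x x) \<and>
     (\<forall>x\<in>X. \<forall>y\<in>X. \<forall>z\<in>X. tensor (d x y) (d y z) \<le> d x z)"

definition non_expansive :: "'x set \<Rightarrow> ('x \<Rightarrow> 'x \<Rightarrow> 'v::order) \<Rightarrow> ('z \<Rightarrow> 'z \<Rightarrow> 'v) \<Rightarrow> ('x \<Rightarrow> 'z) \<Rightarrow> bool" where
  "non_expansive X dX dZ f \<longleftrightarrow> (\<forall>x\<in>X. \<forall>x'\<in>X. dX x x' \<le> dZ (f x) (f x'))"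

end

theory Submission
  imports Defs
begin

lemma q_mono:
  assumes q: "quantale tensor k" and "b \<le> b'"
  shows "tensor a b \<le> tensor a (b'::'v::complete_lattice)"
proof -
  have "Sup {b, b'} = b'" using assms(2) by (simp add: sup.absorb2)
  hence "tensor a b' = Sup ((\<lambda>x. tensor a x) ` {b, b'})"
    using q unfolding quantale_def by metis
  thus ?thesis by (metis image_insert image_empty Sup_insert Sup_empty sup_bot_right sup.cobounded1)
qed

lemma q_res_le:
  assumes q: "quantale tensor k"
  shows "tensor a (residuum tensor a c) \<le> (c::'v::complete_lattice)"
proof -
  have "tensor a (residuum tensor a c) = Sup ((\<lambda>b. tensor a b) ` {b. tensor a b \<le> c})"
    using q unfolding quantale_def residuum_def by metis
  thus ?thesis by (auto intro: Sup_least)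
qed

lemma q_res_iff:
  assumes q: "quantale tensor k"
  shows "(b \<le> residuum tensor a c) \<longleftrightarrow> tensor a b \<le> (c::'v::complete_lattice)"
proof
  assume "b \<le> residuum tensor a c"
  hence "tensor a b \<le> tensor a (residuum tensor a c)" by (rule q_mono[OF q])
  thus "tensor a b \<le> c" using q_res_le[OF q] order_trans by blast
next
  assume "tensor a b \<le> c"
  thus "b \<le> residuum tensor a c" unfolding residuum_def by (auto intro: Sup_upper)
qed

theorem mainTheorem2:
  fixes tensor :: "'v::complete_lattice \<Rightarrow> 'v \<Rightarrow> 'v" and k :: 'v
    and X :: "'x set" and d :: "'x \<Rightarrow> 'x \<Rightarrow> 'v" and Y :: "'x set" and f :: "'x \<Rightarrow> 'v"
  assumes "quantale tensor k"
    and "V_category tensor k X d"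
    and "Y \<subseteq> X"
    and "non_expansive Y d (residuum tensor) f"
  shows "\<exists>fbar. non_expansive X d (residuum tensor) fbar \<and> (\<forall>y\<in>Y. fbar y = f y)"
proof -
  note q = assms(1)
  have assoc: "\<And>a b c. tensor (tensor a b) c = tensor a (tensor b c)"
    and comm: "\<And>a b. tensor a b = tensor b a"
    and unit: "\<And>a. tensor k a = a"
    and distr: "\<And>a B. tensor a (Sup B) = Sup ((\<lambda>b. tensor a b) ` B)"
    using q unfolding quantale_def by auto
  have refl: "\<And>x. x \<in> X \<Longrightarrow> k \<le> d x x"
    and tr: "\<And>x y z. x \<in> X \<Longrightarrow> y \<in> X \<Longrightarrow> z \<in> X \<Longrightarrow> tensor (d x y) (d y z) \<le> d x z"
    using assms(2) unfolding V_category_def by auto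
  have ne: "\<And>y y'. y \<in> Y \<Longrightarrow> y' \<in> Y \<Longrightarrow> tensor (f y) (d y y') \<le> f y'"
    using assms(4) q_res_iff[OF q] unfolding non_expansive_def by blast
  define g where "g x = Sup ((\<lambda>y. tensor (f y) (d y x)) ` Y)" for x
  have "non_expansive X d (residuum tensor) g"
    unfolding non_expansive_def
  proof (intro ballI)
    fix x x' assume x: "x \<in> X" and x': "x' \<in> X"
    have "tensor (g x) (d x x') = tensor (d x x') (g x)" by (rule comm)
    also have "\<dots> = Sup ((\<lambda>b. tensor (d x x') b) ` ((\<lambda>y. tensor (f y) (d y x)) ` Y))"
      unfolding g_def by (rule distr)
    also have "\<dots> \<le> g x'"
    proof (rule Sup_least, clarify)
      fix y assume y: "y \<in> Y"
      have "tensor (d x x') (tensor (f y) (d y x)) = tensor (f y) (tensor (d y x) (d x x'))"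
        by (metis assoc comm)
      also have "\<dots> \<le> tensor (f y) (d y x')"
        using q_mono[OF q tr] y assms(3) x x' by blast
      also have "\<dots> \<le> g x'" unfolding g_def using y by (auto intro: Sup_upper)
      finally show "tensor (d x x') (tensor (f y) (d y x)) \<le> g x'" .
    qed
    finally show "d x x' \<le> residuum tensor (g x) (g x')" using q_res_iff[OF q] by blast
  qed
  moreover have "\<forall>y\<in>Y. g y = f y"
  proof
    fix y assume y: "y \<in> Y"
    have "g y \<le> f y" unfolding g_def using ne y by (auto intro: Sup_least)
    moreover have "f y \<le> g y"
    proof -
      have "f y = tensor (f y) k" by (metis comm unit)
      also have "\<dots> \<le> tensor (f y) (d y y)" using q_mono[OF q refl] y assms(3) by blast
      also have "\<dots> \<le> g y" unfolding g_def using y by (auto intro: Sup_upper)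
      finally show ?thesis .
    qed
    ultimately show "g y = f y" by (rule antisym)
  qed
  ultimately show ?thesis by blast
qed

end
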